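(* Let $X$ be a (complete) doubling metric measure space, let $E\subset X$ be a closed set, and assume $\overline{\operatorname{co\,dim}}_A(E)<q$. Then there exists a constant $C>0$ such that \[\mathcal H^{\mu,q}_R\big(E\cap B(w,R)\big)\ge C\,R^{-q}\mu(B(w,R))\] for every $w\in E$ and all $0<R<\operatorname{diam}(E)$.
   Context: $(X,d,\mu)$ is a complete metric space with a Borel measure $\mu$ such that every closed ball $B(x,r)=\{y:d(x,y)\le r\}$, $r>0$, has $0<\mu(B(x,r))<\infty$, and $\mu$ is doubling. For $E\subset X$ and $r>0$, $E_r=\{x\in X:\operatorname{dist}(x,E)<r\}$. The upper Assouad codimension $\overline{\operatorname{co\,dim}}_A(E)$ is the infimum of all $s\ge0$ for which there is $c>0$ such that $\frac{\mu(E_r\cap B(x,R))}{\mu(B(x,R))}\ge c(r/R)^s$ for every $x\in E$ and all $0<r<R<\operatorname{diam}(E)$. For $q\ge0$ and $R>0$, the Hausdorff content of codimension $q$ is $\mathcal H_R^{\mu,q}(A)=\inf\{\sum_k\operatorname{rad}(B_k)^{-q}\mu(B_k): A\subset\bigcup_k B_k,\ \operatorname{rad}(B_k)\le R\}$, the infimum over countable covers by balls. *)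

theory Defs
  imports "HOL-Analysis.Analysis"
begin

definition doubling_mms :: "('a::metric_space) measure \<Rightarrow> bool" where
  "doubling_mms \<mu> \<longleftrightarrow>
     sets \<mu> = sets borel \<and>
     (\<forall>x r. r > 0 \<longrightarrow> 0 < emeasure \<mu> (cball x r) \<and> emeasure \<mu> (cball x r) < \<infinity>) \<and>
     (\<exists>Cd. \<forall>x r. r > 0 \<longrightarrow> measure \<mu> (cball x (2 * r)) \<le> Cd * measure \<mu> (cball x r))"

definition ediam :: "('a::metric_space) set \<Rightarrow> ereal" where
  "ediam E = (SUP p\<in>E \<times> E. ereal (dist (fst p) (snd p)))"

definition nbhd :: "('a::metric_space) set \<Rightarrow> real \<Rightarrow> 'a set" where
  "nbhd E r = {x. infdist x E < r}"

text \<open>Upper Assouad codimension (infimum in the extended reals; empty set gives \<infinity>).\<close>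
definition upper_assouad_codim :: "('a::metric_space) measure \<Rightarrow> 'a set \<Rightarrow> ereal" where
  "upper_assouad_codim \<mu> E = Inf {ereal s | s. s \<ge> 0 \<and>
     (\<exists>c>0. \<forall>x\<in>E. \<forall>r R. 0 < r \<longrightarrow> r < R \<longrightarrow> ereal R < ediam E \<longrightarrow>
        measure \<mu> (nbhd E r \<inter> cball x R) / measure \<mu> (cball x R) \<ge> c * (r / R) powr s)}"

text \<open>Hausdorff content of codimension q at scale R: infimum over countable covers by
  closed balls, given as countable families of (centre, radius) pairs with 0 < radius \<le> R.\<close>
definition hausdorff_content_codim ::
    "('a::metric_space) measure \<Rightarrow> real \<Rightarrow> real \<Rightarrow> 'a set \<Rightarrow> ennreal" where
  "hausdorff_content_codim \<mu> q R A = Inf {(\<Sum>\<^sub>\<infinity>b\<in>\<B>. ennreal (snd b powr (-q) * measure \<mu> (cball (fst b) (snd b)))) | \<B>.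
      countable \<B> \<and> (\<forall>b\<in>\<B>. 0 < snd b \<and> snd b \<le> R) \<and> A \<subseteq> (\<Union>b\<in>\<B>. cball (fst b) (snd b))}"

end

theory Submission imports Defs begin

locale dbl =
  fixes \<mu> :: "'a::metric_space measure" and Cd :: real
  assumes sets_eq: "sets \<mu> = sets borel"
    and posb: "\<And>x r. r > 0 \<Longrightarrow> 0 < emeasure \<mu> (cball x r)"
    and finb: "\<And>x r. r > 0 \<Longrightarrow> emeasure \<mu> (cball x r) < \<infinity>"
    and dblb: "\<And>x r. r > 0 \<Longrightarrow> measure \<mu> (cball x (2 * r)) \<le> Cd * measure \<mu> (cball x r)"
begin

lemma closed_sets: "closed A \<Longrightarrow> A \<in> sets \<mu>"
  using sets_eq by simp

lemma open_sets: "open A \<Longrightarrow> A \<in> sets \<mu>"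
  using sets_eq by simp

lemma cball_fm: "r > 0 \<Longrightarrow> cball x r \<in> fmeasurable \<mu>"
  by (intro fmeasurableI closed_sets finb) auto

lemma meas_pos: "r > 0 \<Longrightarrow> 0 < measure \<mu> (cball x r)"
  using posb[of r x] finb[of r x] by (simp add: emeasure_eq_measure2 cball_fm)

lemma sub_le: "A \<in> sets \<mu> \<Longrightarrow> A \<subseteq> cball x r \<Longrightarrow> r > 0 \<Longrightarrow> measure \<mu> A \<le> measure \<mu> (cball x r)"
  by (rule measure_mono_fmeasurable) (auto intro: cball_fm)

lemma Cd_ge1: "Cd \<ge> 1"
proof -
  have "measure \<mu> (cball undefined 1) \<le> measure \<mu> (cball undefined (2*1))"
    by (intro sub_le closed_sets) auto
  also have "\<dots> \<le> Cd * measure \<mu> (cball undefined 1)" by (rule dblb) simp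
  finally show ?thesis using meas_pos[of 1 undefined] by simp
qed

lemma dbl_iter: "t > 0 \<Longrightarrow> measure \<mu> (cball x (2^m * t)) \<le> Cd^m * measure \<mu> (cball x t)"
proof (induction m)
  case 0 then show ?case by simp
next
  case (Suc m)
  have "measure \<mu> (cball x (2^Suc m * t)) = measure \<mu> (cball x (2 * (2^m * t)))"
    by (simp add: mult.assoc)
  also have "\<dots> \<le> Cd * measure \<mu> (cball x (2^m * t))" using Suc by (intro dblb) simp
  also have "\<dots> \<le> Cd * (Cd^m * measure \<mu> (cball x t))"
    using Suc Cd_ge1 by (intro mult_left_mono) auto
  finally show ?case by (simp add: mult.assoc)
qed

lemma dbl_cmp:
  assumes "t > 0" "A \<in> sets \<mu>" "A \<subseteq> cball x R" "R \<le> 2^m * t"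
  shows "measure \<mu> A \<le> Cd^m * measure \<mu> (cball x t)"
proof -
  have "measure \<mu> A \<le> measure \<mu> (cball x (2^m * t))"
    using assms by (intro sub_le) auto
  also have "\<dots> \<le> Cd^m * measure \<mu> (cball x t)" using assms by (intro dbl_iter)
  finally show ?thesis .
qed

lemma sep_bound_finite:
  fixes y :: 'a
  assumes "\<epsilon> > 0" "\<rho> > 0"
  shows "\<exists>N::real. \<forall>Z. finite Z \<longrightarrow> Z \<subseteq> cball y \<rho> \<longrightarrow> (\<forall>a\<in>Z. \<forall>b\<in>Z. a \<noteq> b \<longrightarrow> \<epsilon> < dist a b) \<longrightarrow> real (card Z) \<le> N"
proof -
  obtain m where m: "(2*\<rho>+\<epsilon>) / (\<epsilon>/2) < 2^m" using real_arch_pow[of 2] by auto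
  have m': "2*\<rho>+\<epsilon> \<le> 2^m * (\<epsilon>/2)" using m assms by (simp add: field_simps)
  define F where "F = cball y (\<rho> + \<epsilon>/2)"
  have Fpos: "0 < measure \<mu> F" unfolding F_def using assms by (intro meas_pos) auto
  show ?thesis
  proof (intro exI allI impI)
    fix Z assume Z: "finite Z" "Z \<subseteq> cball y \<rho>" "\<forall>a\<in>Z. \<forall>b\<in>Z. a \<noteq> b \<longrightarrow> \<epsilon> < dist a b"
    have each: "measure \<mu> F \<le> Cd^m * measure \<mu> (cball z (\<epsilon>/2))" if "z \<in> Z" for z
    proof (rule dbl_cmp[where R="2*\<rho>+\<epsilon>"])
      show "F \<subseteq> cball z (2*\<rho>+\<epsilon>)"
      proof
        fix t assume "t \<in> F"
        then have "dist y t \<le> \<rho> + \<epsilon>/2" unfolding F_def by simp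
        moreover have "dist y z \<le> \<rho>" using Z that by auto
        ultimately show "t \<in> cball z (2*\<rho>+\<epsilon>)"
          using dist_triangle[of z t y] assms by (simp add: dist_commute)
      qed
    qed (use assms m' F_def closed_sets in auto)
    have "real (card Z) * measure \<mu> F = (\<Sum>z\<in>Z. measure \<mu> F)" by simp
    also have "\<dots> \<le> (\<Sum>z\<in>Z. Cd^m * measure \<mu> (cball z (\<epsilon>/2)))" by (intro sum_mono each)
    also have "\<dots> = Cd^m * measure \<mu> (\<Union>z\<in>Z. cball z (\<epsilon>/2))"
    proof -
      have "measure \<mu> (\<Union>z\<in>Z. cball z (\<epsilon>/2)) = (\<Sum>z\<in>Z. measure \<mu> (cball z (\<epsilon>/2)))"
      proof (rule measure_UNION')
        show "pairwise (\<lambda>i j. disjnt (cball i (\<epsilon> / 2)) (cball j (\<epsilon> / 2))) Z"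
          unfolding pairwise_def disjnt_def using Z(3)
          by (auto simp: dist_commute) (smt (verit) dist_triangle2 dist_commute)
      qed (use Z assms cball_fm in auto)
      then show ?thesis by (simp add: sum_distrib_left)
    qed
    also have "\<dots> \<le> Cd^m * measure \<mu> F"
    proof -
      have "measure \<mu> (\<Union>z\<in>Z. cball z (\<epsilon>/2)) \<le> measure \<mu> F"
      proof (unfold F_def, intro sub_le closed_sets closed_UN)
        show "(\<Union>z\<in>Z. cball z (\<epsilon>/2)) \<subseteq> cball y (\<rho> + \<epsilon>/2)"
        proof
          fix t assume "t \<in> (\<Union>z\<in>Z. cball z (\<epsilon>/2))"
          then obtain z where "z \<in> Z" "dist z t \<le> \<epsilon>/2" by auto
          moreover have "dist y z \<le> \<rho>" using Z \<open>z \<in> Z\<close> by auto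
          ultimately show "t \<in> cball y (\<rho> + \<epsilon>/2)"
            using dist_triangle[of y t z] by simp
        qed
      qed (use Z assms in auto)
      then show ?thesis using Cd_ge1 by (intro mult_left_mono) auto
    qed
    finally show "real (card Z) \<le> Cd^m" using Fpos by simp
  qed
qed

lemma maximal_sep:
  fixes y :: 'a
  assumes "\<epsilon> > 0" "\<rho> > 0" "S \<subseteq> cball y \<rho>"
  shows "\<exists>Z\<subseteq>S. finite Z \<and> (\<forall>a\<in>Z. \<forall>b\<in>Z. a \<noteq> b \<longrightarrow> \<epsilon> < dist a b) \<and> (\<forall>e\<in>S. \<exists>z\<in>Z. dist e z \<le> \<epsilon>)"
proof -
  obtain N where N: "\<And>Z. finite Z \<Longrightarrow> Z \<subseteq> cball y \<rho> \<Longrightarrow> (\<forall>a\<in>Z. \<forall>b\<in>Z. a \<noteq> b \<longrightarrow> \<epsilon> < dist a b) \<Longrightarrow> real (card Z) \<le> N"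
    using sep_bound_finite[OF assms(1,2), of y] by blast
  define P where "P Z \<longleftrightarrow> finite Z \<and> Z \<subseteq> S \<and> (\<forall>a\<in>Z. \<forall>b\<in>Z. a \<noteq> b \<longrightarrow> \<epsilon> < dist a b)" for Z
  have "P {}" unfolding P_def by simp
  moreover have "\<forall>Z. P Z \<longrightarrow> card Z < nat \<lceil>N\<rceil> + 1"
  proof (intro allI impI)
    fix Z assume "P Z"
    then have "finite Z" "Z \<subseteq> cball y \<rho>" "\<forall>a\<in>Z. \<forall>b\<in>Z. a \<noteq> b \<longrightarrow> \<epsilon> < dist a b"
      using assms(3) unfolding P_def by auto
    then have "real (card Z) \<le> N" by (rule N)
    then have "real (card Z) < real (nat \<lceil>N\<rceil> + 1)" by linarith
    then show "card Z < nat \<lceil>N\<rceil> + 1" by (simp only: of_nat_less_iff)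
  qed
  ultimately obtain Z where Z: "P Z" and mx: "\<And>Y. P Y \<Longrightarrow> card Y \<le> card Z"
    using ex_has_greatest_nat[of P "{}" card "nat \<lceil>N\<rceil> + 1"] by metis
  have "\<forall>e\<in>S. \<exists>z\<in>Z. dist e z \<le> \<epsilon>"
  proof (rule ccontr)
    assume "\<not> ?thesis"
    then obtain e where e: "e \<in> S" "\<And>z. z \<in> Z \<Longrightarrow> \<epsilon> < dist e z" by (meson not_le)
    have "e \<notin> Z" using e(2)[of e] assms(1) by auto
    have "P (insert e Z)"
      unfolding P_def
    proof (intro conjI ballI impI)
      show "finite (insert e Z)" "insert e Z \<subseteq> S" using Z e unfolding P_def by auto
      fix a b assume ab: "a \<in> insert e Z" "b \<in> insert e Z" "a \<noteq> b"
      show "\<epsilon> < dist a b"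
      proof (cases "a = e")
        case True
        then have "b \<in> Z" using ab by auto
        then show ?thesis using e(2) True by simp
      next
        case False
        note aZ = this
        show ?thesis
        proof (cases "b = e")
          case True
          then have "a \<in> Z" using ab aZ by auto
          then show ?thesis using e(2)[of a] True by (simp add: dist_commute)
        next
          case False
          then show ?thesis using Z ab aZ unfolding P_def by auto
        qed
      qed
    qed
    then have "card (insert e Z) \<le> card Z" by (rule mx)
    with \<open>e \<notin> Z\<close> Z show False unfolding P_def by simp
  qed
  with Z show ?thesis unfolding P_def by auto
qed

end

locale codim = dbl +
  fixes E :: "'a::metric_space set" and c s q :: real
  assumes c_pos: "c > 0" and s_nn: "0 \<le> s" and sq: "s < q"
    and cod: "\<And>x r R. x \<in> E \<Longrightarrow> 0 < r \<Longrightarrow> r < R \<Longrightarrow> ereal R < ediam E \<Longrightarrow>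
       c * (r/R) powr s \<le> measure \<mu> (nbhd E r \<inter> cball x R) / measure \<mu> (cball x R)"
begin

definition "\<delta> = min (1/8) ((c / Cd^4) powr (1/(q-s)))"

lemma q_pos: "q > 0" using s_nn sq by simp

lemma \<delta>_pos: "0 < \<delta>"
  unfolding \<delta>_def using c_pos Cd_ge1 by simp

lemma \<delta>_le: "\<delta> \<le> 1/8" unfolding \<delta>_def by simp

lemma \<delta>_key: "\<delta> powr q \<le> c / Cd^4 * \<delta> powr s"
proof -
  have "\<delta> powr (q - s) \<le> ((c / Cd^4) powr (1/(q-s))) powr (q - s)"
    using sq \<delta>_pos by (intro powr_mono2) (auto simp: \<delta>_def)
  also have "\<dots> = c / Cd^4" using sq c_pos Cd_ge1 by (simp add: powr_powr)
  finally have "\<delta> powr (q - s) \<le> c / Cd^4" .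
  then have "\<delta> powr (q - s) * \<delta> powr s \<le> c / Cd^4 * \<delta> powr s"
    by (intro mult_right_mono) auto
  moreover have "\<delta> powr (q - s) * \<delta> powr s = \<delta> powr q"
    by (simp add: powr_add[symmetric])
  ultimately show ?thesis by simp
qed

definition "m0 = (LEAST m::nat. 4/\<delta> \<le> 2^m)"

lemma m0: "4/\<delta> \<le> 2^m0"
proof -
  obtain m :: nat where "4/\<delta> < 2^m" using real_arch_pow[of 2 "4/\<delta>"] by auto
  then have "4/\<delta> \<le> 2^m" by simp
  then show ?thesis unfolding m0_def by (rule LeastI[where P="\<lambda>m. 4/\<delta> \<le> (2::real)^m"])
qed

definition "K = 2 powr (-q) / Cd^m0"

lemma K_pos: "K > 0" unfolding K_def using Cd_ge1 by simp

lemma case1: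
  fixes ctr :: "'b \<Rightarrow> 'a" and r :: "'b \<Rightarrow> real"
  assumes "finite I" "i \<in> I" "\<delta>*\<rho> \<le> r i" "r i \<le> 2*\<rho>" "p \<in> cball (ctr i) (r i)" "p \<in> cball y \<rho>" "\<rho> > 0"
    and rpos: "\<forall>j\<in>I. 0 < r j"
  shows "K * \<rho> powr (-q) * measure \<mu> (cball y \<rho>) \<le> (\<Sum>j\<in>I. r j powr (-q) * measure \<mu> (cball (ctr j) (r j)))"
proof -
  have ri: "r i > 0" using rpos assms(2) by auto
  have A: "measure \<mu> (cball y \<rho>) \<le> Cd^m0 * measure \<mu> (cball (ctr i) (r i))"
  proof (rule dbl_cmp[where R="4*\<rho>"])
    show "cball y \<rho> \<subseteq> cball (ctr i) (4*\<rho>)"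
    proof
      fix t assume "t \<in> cball y \<rho>"
      then have "dist y t \<le> \<rho>" by simp
      moreover have "dist (ctr i) p \<le> r i" "dist y p \<le> \<rho>" using assms by auto
      ultimately show "t \<in> cball (ctr i) (4*\<rho>)"
        using dist_triangle[of "ctr i" t p] dist_triangle[of p t y] assms(4) by (simp add: dist_commute)
    qed
    have "4*\<rho> = (4/\<delta>) * (\<delta>*\<rho>)" using \<delta>_pos by simp
    also have "\<dots> \<le> 2^m0 * r i" using m0 assms(3) \<delta>_pos assms(7) by (intro mult_mono) auto
    finally show "4*\<rho> \<le> 2^m0 * r i" .
  qed (use ri closed_sets in auto)
  have B: "(2*\<rho>) powr (-q) \<le> r i powr (-q)" using q_pos ri assms(4) by (intro powr_mono2') auto
  have "K * \<rho> powr (-q) * measure \<mu> (cball y \<rho>) = 2 powr (-q) * \<rho> powr (-q) * (measure \<mu> (cball y \<rho>) / Cd^m0)"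
    unfolding K_def by simp
  also have "\<dots> \<le> 2 powr (-q) * \<rho> powr (-q) * measure \<mu> (cball (ctr i) (r i))"
    using A Cd_ge1 by (intro mult_left_mono) (auto simp: divide_le_eq mult.commute)
  also have "\<dots> = (2*\<rho>) powr (-q) * measure \<mu> (cball (ctr i) (r i))" by (simp add: powr_mult)
  also have "\<dots> \<le> r i powr (-q) * measure \<mu> (cball (ctr i) (r i))"
    using B meas_pos[OF ri] by (intro mult_right_mono) auto
  also have "\<dots> \<le> (\<Sum>j\<in>I. r j powr (-q) * measure \<mu> (cball (ctr j) (r j)))"
    using assms(1,2) rpos meas_pos by (intro member_le_sum) (auto intro: less_imp_le)
  finally show ?thesis .
qed

lemma meas_part:
  assumes y: "y \<in> E" and rho: "\<rho> > 0" and diam: "ereal \<rho> < ediam E"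
    and Z: "Z \<subseteq> E \<inter> cball y (3*\<rho>/4)" "finite Z"
    and cov: "\<forall>e\<in>E \<inter> cball y (3*\<rho>/4). \<exists>z\<in>Z. dist e z \<le> 4*\<delta>*\<rho>"
  shows "\<delta> powr q * measure \<mu> (cball y \<rho>) \<le> (\<Sum>z\<in>Z. measure \<mu> (cball z (\<delta>*\<rho>)))"
proof -
  define A where "A = nbhd E (\<delta>*\<rho>) \<inter> cball y (\<rho>/2)"
  define U where "U = (\<Union>z\<in>Z. cball z (8*\<delta>*\<rho>))"
  define M where "M = (\<Sum>z\<in>Z. measure \<mu> (cball z (\<delta>*\<rho>)))"
  have dr: "0 < \<delta>*\<rho>" using \<delta>_pos rho by simp
  have dr8: "\<delta>*\<rho> \<le> (1/8)*\<rho>" using \<delta>_le rho by (intro mult_right_mono) auto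
  have dr2: "\<delta>*\<rho> < \<rho>/2" using dr8 rho by linarith
  have "ereal (\<rho>/2) < ereal \<rho>" using rho by simp
  then have d2: "ereal (\<rho>/2) < ediam E" using diam by (rule less_trans)
  have "c * ((\<delta>*\<rho>)/(\<rho>/2)) powr s \<le> measure \<mu> A / measure \<mu> (cball y (\<rho>/2))"
    unfolding A_def using cod[OF y dr dr2 d2] .
  moreover have "(\<delta>*\<rho>)/(\<rho>/2) = 2*\<delta>" using rho by simp
  moreover have py2: "0 < measure \<mu> (cball y (\<rho>/2))" using rho by (intro meas_pos) simp
  ultimately have c1: "c * (2*\<delta>) powr s * measure \<mu> (cball y (\<rho>/2)) \<le> measure \<mu> A"
    by (simp add: le_divide_eq)
  have AU: "A \<subseteq> U"
  proof
    fix x assume "x \<in> A"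
    then have x1: "infdist x E < \<delta>*\<rho>" and x2: "dist y x \<le> \<rho>/2" unfolding A_def nbhd_def by auto
    have "E \<noteq> {}" using y by auto
    then have "(INF a\<in>E. dist x a) < \<delta>*\<rho>" using x1 by (simp add: infdist_notempty)
    then obtain a where a: "a \<in> E" "dist x a < \<delta>*\<rho>"
      using \<open>E \<noteq> {}\<close> by (subst (asm) cINF_less_iff) (auto intro: bdd_belowI[where m=0])
    have "dist y a \<le> 3*\<rho>/4" using dist_triangle[of y a x] x2 a(2) rho dr8 by linarith
    then have "a \<in> E \<inter> cball y (3*\<rho>/4)" using a(1) by simp
    then obtain z where z: "z \<in> Z" "dist a z \<le> 4*\<delta>*\<rho>" using cov by blast
    have "dist z x \<le> 8*\<delta>*\<rho>" using dist_triangle[of z x a] z(2) a(2) dr by (simp add: dist_commute)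
    then show "x \<in> U" unfolding U_def using z(1) by auto
  qed
  have Asets: "A \<in> sets \<mu>"
  proof -
    have "open (nbhd E (\<delta>*\<rho>))" unfolding nbhd_def
      by (intro open_Collect_less continuous_intros)
    then show ?thesis unfolding A_def using sets_eq by simp
  qed
  have Ufm: "U \<in> fmeasurable \<mu>"
  proof (rule fmeasurableI2[OF cball_fm[of "2*\<rho>" y]])
    show "U \<in> sets \<mu>" unfolding U_def using Z by (intro closed_sets closed_UN) auto
    show "U \<subseteq> cball y (2*\<rho>)"
    proof
      fix x assume "x \<in> U"
      then obtain z where "z \<in> Z" "dist z x \<le> 8*\<delta>*\<rho>" unfolding U_def by auto
      moreover have "dist y z \<le> 3*\<rho>/4" using Z \<open>z \<in> Z\<close> by auto
      moreover have "8*\<delta>*\<rho> \<le> \<rho>" using dr8 by linarith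
      ultimately have "dist y x \<le> 2*\<rho>" using dist_triangle[of y x z] rho by linarith
      then show "x \<in> cball y (2*\<rho>)" by simp
    qed
  qed (use rho in simp)
  have "measure \<mu> A \<le> measure \<mu> U" by (rule measure_mono_fmeasurable[OF AU Asets Ufm])
  also have "\<dots> \<le> (\<Sum>z\<in>Z. measure \<mu> (cball z (8*\<delta>*\<rho>)))"
    unfolding U_def using Z by (intro measure_UNION_le closed_sets) auto
  also have "\<dots> \<le> (\<Sum>z\<in>Z. Cd^3 * measure \<mu> (cball z (\<delta>*\<rho>)))"
  proof (rule sum_mono)
    fix z assume "z \<in> Z"
    have "measure \<mu> (cball z (2^3 * (\<delta>*\<rho>))) \<le> Cd^3 * measure \<mu> (cball z (\<delta>*\<rho>))"
      using dr by (rule dbl_iter)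
    then show "measure \<mu> (cball z (8*\<delta>*\<rho>)) \<le> Cd^3 * measure \<mu> (cball z (\<delta>*\<rho>))"
      by (simp add: mult.assoc)
  qed
  also have "\<dots> = Cd^3 * M" unfolding M_def by (simp add: sum_distrib_left)
  finally have c2: "measure \<mu> A \<le> Cd^3 * M" .
  have c3: "measure \<mu> (cball y \<rho>) \<le> Cd * measure \<mu> (cball y (\<rho>/2))"
    using dblb[of "\<rho>/2" y] rho by simp
  have cs: "0 \<le> c * (2*\<delta>) powr s" using c_pos by simp
  have "c * (2*\<delta>) powr s * measure \<mu> (cball y \<rho>) \<le> c * (2*\<delta>) powr s * (Cd * measure \<mu> (cball y (\<rho>/2)))"
    using c3 cs by (rule mult_left_mono)
  also have "\<dots> = Cd * (c * (2*\<delta>) powr s * measure \<mu> (cball y (\<rho>/2)))" by simp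
  also have "\<dots> \<le> Cd * (Cd^3 * M)" using c1 c2 Cd_ge1 by (intro mult_left_mono) auto
  finally have c4: "c * (2*\<delta>) powr s * measure \<mu> (cball y \<rho>) \<le> Cd^4 * M"
    by (simp add: power_eq_if mult.assoc eval_nat_numeral)
  have py: "0 < measure \<mu> (cball y \<rho>)" using rho by (intro meas_pos)
  have "\<delta> powr q * measure \<mu> (cball y \<rho>) \<le> c / Cd^4 * \<delta> powr s * measure \<mu> (cball y \<rho>)"
    using \<delta>_key py by (intro mult_right_mono) auto
  also have "\<dots> \<le> c / Cd^4 * (2*\<delta>) powr s * measure \<mu> (cball y \<rho>)"
    using py c_pos Cd_ge1 s_nn \<delta>_pos by (intro mult_right_mono mult_left_mono powr_mono2) auto
  also have "\<dots> = (c * (2*\<delta>) powr s * measure \<mu> (cball y \<rho>)) / Cd^4" by simp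
  also have "\<dots> \<le> M" using c4 Cd_ge1 by (simp add: divide_le_eq mult.commute)
  finally show ?thesis unfolding M_def .
qed

lemma case2:
  fixes ctr :: "'b \<Rightarrow> 'a" and r :: "'b \<Rightarrow> real"
  assumes IH: "\<And>y \<rho> I. y \<in> E \<Longrightarrow> 0 < \<rho> \<Longrightarrow> ereal \<rho> < ediam E \<Longrightarrow> finite I \<Longrightarrow>
      (\<forall>i\<in>I. \<delta>^J*\<rho> \<le> r i \<and> r i \<le> 2*\<rho>) \<Longrightarrow> E \<inter> cball y \<rho> \<subseteq> (\<Union>i\<in>I. cball (ctr i) (r i)) \<Longrightarrow>
      K * \<rho> powr (-q) * measure \<mu> (cball y \<rho>) \<le> (\<Sum>i\<in>I. r i powr (-q) * measure \<mu> (cball (ctr i) (r i)))"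
    and y: "y \<in> E" and rho: "0 < \<rho>" and diam: "ereal \<rho> < ediam E" and fin: "finite I"
    and rad: "\<forall>i\<in>I. \<delta>^Suc J*\<rho> \<le> r i \<and> r i \<le> 2*\<rho>"
    and cov: "E \<inter> cball y \<rho> \<subseteq> (\<Union>i\<in>I. cball (ctr i) (r i))"
    and small: "\<And>i p. i \<in> I \<Longrightarrow> p \<in> E \<inter> cball y \<rho> \<Longrightarrow> p \<in> cball (ctr i) (r i) \<Longrightarrow> r i < \<delta>*\<rho>"
  shows "K * \<rho> powr (-q) * measure \<mu> (cball y \<rho>) \<le> (\<Sum>i\<in>I. r i powr (-q) * measure \<mu> (cball (ctr i) (r i)))"
proof -
  define f where "f i = r i powr (-q) * measure \<mu> (cball (ctr i) (r i))" for i
  have dr: "0 < \<delta>*\<rho>" using \<delta>_pos rho by simp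
  have dr8: "\<delta>*\<rho> \<le> (1/8)*\<rho>" using \<delta>_le rho by (intro mult_right_mono) auto
  have rpos: "0 < r i" if "i \<in> I" for i
  proof -
    have "0 < \<delta>^Suc J*\<rho>" using \<delta>_pos rho by simp
    then show ?thesis using rad that by (meson less_le_trans)
  qed
  have fnn: "0 \<le> f i" if "i \<in> I" for i
    unfolding f_def using rpos[OF that] meas_pos[of "r i"] by (intro mult_nonneg_nonneg) (auto intro: less_imp_le)
  define S where "S = E \<inter> cball y (3*\<rho>/4)"
  obtain Z where Z: "Z \<subseteq> S" "finite Z" and sep: "\<forall>a\<in>Z. \<forall>b\<in>Z. a \<noteq> b \<longrightarrow> 4*\<delta>*\<rho> < dist a b"
    and Zcov: "\<forall>e\<in>S. \<exists>z\<in>Z. dist e z \<le> 4*\<delta>*\<rho>"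
  proof -
    have "S \<subseteq> cball y (3*\<rho>/4)" unfolding S_def by auto
    moreover have "0 < 4*\<delta>*\<rho>" "0 < 3*\<rho>/4" using dr rho by (auto simp: mult.assoc)
    ultimately have "\<exists>Z\<subseteq>S. finite Z \<and> (\<forall>a\<in>Z. \<forall>b\<in>Z. a \<noteq> b \<longrightarrow> 4*\<delta>*\<rho> < dist a b) \<and> (\<forall>e\<in>S. \<exists>z\<in>Z. dist e z \<le> 4*\<delta>*\<rho>)"
      using maximal_sep[of "4*\<delta>*\<rho>" "3*\<rho>/4" S y] by blast
    then show ?thesis using that by blast
  qed
  define Iz where "Iz z = {i\<in>I. \<exists>p\<in>E \<inter> cball z (\<delta>*\<rho>). p \<in> cball (ctr i) (r i)}" for z
  have zsub: "cball z (\<delta>*\<rho>) \<subseteq> cball y \<rho>" if "z \<in> Z" for z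
  proof
    fix t assume "t \<in> cball z (\<delta>*\<rho>)"
    then have "dist z t \<le> \<delta>*\<rho>" by simp
    moreover have "dist y z \<le> 3*\<rho>/4" using Z that unfolding S_def by auto
    ultimately have "dist y t \<le> \<rho>" using dist_triangle[of y t z] dr8 rho by linarith
    then show "t \<in> cball y \<rho>" by simp
  qed
  have IHz: "K * (\<delta>*\<rho>) powr (-q) * measure \<mu> (cball z (\<delta>*\<rho>)) \<le> (\<Sum>i\<in>Iz z. f i)" if zZ: "z \<in> Z" for z
    unfolding f_def
  proof (rule IH)
    show "z \<in> E" using Z zZ unfolding S_def by auto
    show "0 < \<delta>*\<rho>" by (rule dr)
    have "ereal (\<delta>*\<rho>) < ereal \<rho>" using dr8 rho by simp
    then show "ereal (\<delta>*\<rho>) < ediam E" using diam by (rule less_trans)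
    show "finite (Iz z)" unfolding Iz_def using fin by simp
    show "\<forall>i\<in>Iz z. \<delta>^J*(\<delta>*\<rho>) \<le> r i \<and> r i \<le> 2*(\<delta>*\<rho>)"
    proof
      fix i assume "i \<in> Iz z"
      then obtain p where i: "i \<in> I" and p: "p \<in> E \<inter> cball z (\<delta>*\<rho>)" "p \<in> cball (ctr i) (r i)"
        unfolding Iz_def by auto
      have "p \<in> E \<inter> cball y \<rho>" using p zsub[OF zZ] by auto
      then have "r i < \<delta>*\<rho>" using small i p(2) by blast
      moreover have "\<delta>^J*(\<delta>*\<rho>) \<le> r i" using rad i by (simp add: mult.assoc mult.commute mult.left_commute)
      ultimately show "\<delta>^J*(\<delta>*\<rho>) \<le> r i \<and> r i \<le> 2*(\<delta>*\<rho>)" using dr by simp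
    qed
    show "E \<inter> cball z (\<delta>*\<rho>) \<subseteq> (\<Union>i\<in>Iz z. cball (ctr i) (r i))"
    proof
      fix p assume p: "p \<in> E \<inter> cball z (\<delta>*\<rho>)"
      then have "p \<in> E \<inter> cball y \<rho>" using zsub[OF zZ] by auto
      then obtain i where "i \<in> I" "p \<in> cball (ctr i) (r i)" using cov by blast
      then show "p \<in> (\<Union>i\<in>Iz z. cball (ctr i) (r i))" using p unfolding Iz_def by blast
    qed
  qed
  have disj: "\<forall>z\<in>Z. \<forall>z'\<in>Z. z \<noteq> z' \<longrightarrow> Iz z \<inter> Iz z' = {}"
  proof (intro ballI impI)
    fix z z' assume zz: "z \<in> Z" "z' \<in> Z" "z \<noteq> z'"
    show "Iz z \<inter> Iz z' = {}"
    proof (rule ccontr)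
      assume "Iz z \<inter> Iz z' \<noteq> {}"
      then obtain i p p' where i: "i \<in> I" and p: "p \<in> cball z (\<delta>*\<rho>)" "p \<in> cball (ctr i) (r i)" "p \<in> E"
        and p': "p' \<in> cball z' (\<delta>*\<rho>)" "p' \<in> cball (ctr i) (r i)" "p' \<in> E"
        unfolding Iz_def by blast
      have "p \<in> E \<inter> cball y \<rho>" using p zsub[OF zz(1)] by auto
      then have ri: "r i < \<delta>*\<rho>" using small i p(2) by blast
      have "dist z (ctr i) \<le> dist z p + dist p (ctr i)" by (rule dist_triangle)
      also have "\<dots> < 2*\<delta>*\<rho>" using p ri by (simp add: dist_commute)
      finally have d1: "dist z (ctr i) < 2*\<delta>*\<rho>" .
      have "dist z' (ctr i) \<le> dist z' p' + dist p' (ctr i)" by (rule dist_triangle)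
      also have "\<dots> < 2*\<delta>*\<rho>" using p' ri by (simp add: dist_commute)
      finally have d2: "dist z' (ctr i) < 2*\<delta>*\<rho>" .
      have "dist z z' \<le> dist z (ctr i) + dist z' (ctr i)" by (rule dist_triangle2)
      then have "dist z z' < 4*\<delta>*\<rho>" using d1 d2 by linarith
      moreover have "4*\<delta>*\<rho> < dist z z'" using sep zz by blast
      ultimately show False by linarith
    qed
  qed
  have meas: "\<delta> powr q * measure \<mu> (cball y \<rho>) \<le> (\<Sum>z\<in>Z. measure \<mu> (cball z (\<delta>*\<rho>)))"
    by (rule meas_part[OF y rho diam]) (use Z Zcov in \<open>auto simp: S_def\<close>)
  have pw: "(\<delta>*\<rho>) powr (-q) * \<delta> powr q = \<rho> powr (-q)"
  proof -
    have "(\<delta>*\<rho>) powr (-q) * \<delta> powr q = \<rho> powr (-q) * (\<delta> powr (-q) * \<delta> powr q)"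
      by (simp add: powr_mult)
    also have "\<delta> powr (-q) * \<delta> powr q = 1" using \<delta>_pos by (simp add: powr_add[symmetric])
    finally show ?thesis by simp
  qed
  have Kd: "0 \<le> K * (\<delta>*\<rho>) powr (-q)" using K_pos by simp
  have "K * \<rho> powr (-q) * measure \<mu> (cball y \<rho>) = K * (\<delta>*\<rho>) powr (-q) * (\<delta> powr q * measure \<mu> (cball y \<rho>))"
    using pw by (metis mult.assoc mult.commute)
  also have "\<dots> \<le> K * (\<delta>*\<rho>) powr (-q) * (\<Sum>z\<in>Z. measure \<mu> (cball z (\<delta>*\<rho>)))"
    using meas Kd by (rule mult_left_mono)
  also have "\<dots> = (\<Sum>z\<in>Z. K * (\<delta>*\<rho>) powr (-q) * measure \<mu> (cball z (\<delta>*\<rho>)))"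
    by (simp add: sum_distrib_left)
  also have "\<dots> \<le> (\<Sum>z\<in>Z. \<Sum>i\<in>Iz z. f i)" using IHz by (intro sum_mono)
  also have "\<dots> = (\<Sum>i\<in>(\<Union>z\<in>Z. Iz z). f i)"
    using Z(2) disj fin by (subst sum.UNION_disjoint) (auto simp: Iz_def)
  also have "\<dots> \<le> (\<Sum>i\<in>I. f i)"
    using fin fnn by (intro sum_mono2) (auto simp: Iz_def)
  finally show ?thesis unfolding f_def .
qed

lemma fin_main:
  fixes ctr :: "'b \<Rightarrow> 'a" and r :: "'b \<Rightarrow> real"
  shows "\<forall>y \<rho> I. y \<in> E \<longrightarrow> 0 < \<rho> \<longrightarrow> ereal \<rho> < ediam E \<longrightarrow> finite I \<longrightarrow>
      (\<forall>i\<in>I. \<delta>^J*\<rho> \<le> r i \<and> r i \<le> 2*\<rho>) \<longrightarrow> E \<inter> cball y \<rho> \<subseteq> (\<Union>i\<in>I. cball (ctr i) (r i)) \<longrightarrow>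
      K * \<rho> powr (-q) * measure \<mu> (cball y \<rho>) \<le> (\<Sum>i\<in>I. r i powr (-q) * measure \<mu> (cball (ctr i) (r i)))"
proof (induction J)
  case 0
  show ?case
  proof (intro allI impI)
    fix y \<rho> I
    assume y: "y \<in> E" and rho: "0 < \<rho>" and fin: "finite I"
      and rad: "\<forall>i\<in>I. \<delta>^0*\<rho> \<le> r i \<and> r i \<le> 2*\<rho>"
      and cov: "E \<inter> cball y \<rho> \<subseteq> (\<Union>i\<in>I. cball (ctr i) (r i))"
    have "y \<in> E \<inter> cball y \<rho>" using y rho by simp
    then obtain i where i: "i \<in> I" "y \<in> cball (ctr i) (r i)" using cov by blast
    have dr: "\<delta>*\<rho> \<le> \<rho>" using \<delta>_le rho by (simp add: mult_le_cancel_right1)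
    show "K * \<rho> powr (-q) * measure \<mu> (cball y \<rho>) \<le> (\<Sum>i\<in>I. r i powr (-q) * measure \<mu> (cball (ctr i) (r i)))"
    proof (rule case1[where ctr=ctr and r=r and I=I and i=i and p=y])
      show "\<delta>*\<rho> \<le> r i" using rad i(1) dr by auto
      show "r i \<le> 2*\<rho>" using rad i(1) by auto
      show "\<forall>j\<in>I. 0 < r j" using rad rho by (auto intro: less_le_trans)
    qed (use rho fin i in auto)
  qed
next
  case (Suc J)
  show ?case
  proof (intro allI impI)
    fix y \<rho> I
    assume y: "y \<in> E" and rho: "0 < \<rho>" and diam: "ereal \<rho> < ediam E" and fin: "finite I"
      and rad: "\<forall>i\<in>I. \<delta>^Suc J*\<rho> \<le> r i \<and> r i \<le> 2*\<rho>"
      and cov: "E \<inter> cball y \<rho> \<subseteq> (\<Union>i\<in>I. cball (ctr i) (r i))"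
    have rpos: "\<forall>j\<in>I. 0 < r j"
    proof
      fix j assume "j \<in> I"
      have "0 < \<delta>^Suc J*\<rho>" using \<delta>_pos rho by simp
      then show "0 < r j" using rad \<open>j \<in> I\<close> by (meson less_le_trans)
    qed
    show "K * \<rho> powr (-q) * measure \<mu> (cball y \<rho>) \<le> (\<Sum>i\<in>I. r i powr (-q) * measure \<mu> (cball (ctr i) (r i)))"
    proof (cases "\<exists>i\<in>I. \<exists>p. \<delta>*\<rho> \<le> r i \<and> p \<in> E \<inter> cball y \<rho> \<and> p \<in> cball (ctr i) (r i)")
      case True
      then obtain i p where i: "i \<in> I" "\<delta>*\<rho> \<le> r i" "p \<in> E \<inter> cball y \<rho>" "p \<in> cball (ctr i) (r i)" by blast
      show ?thesis
        by (rule case1[where ctr=ctr and r=r and I=I and i=i and p=p]) (use rad i rho rpos fin in auto)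
    next
      case False
      show ?thesis
      proof (rule case2[OF _ y rho diam fin rad cov])
        show "\<And>y \<rho> I. y \<in> E \<Longrightarrow> 0 < \<rho> \<Longrightarrow> ereal \<rho> < ediam E \<Longrightarrow> finite I \<Longrightarrow>
          (\<forall>i\<in>I. \<delta>^J*\<rho> \<le> r i \<and> r i \<le> 2*\<rho>) \<Longrightarrow> E \<inter> cball y \<rho> \<subseteq> (\<Union>i\<in>I. cball (ctr i) (r i)) \<Longrightarrow>
          K * \<rho> powr (-q) * measure \<mu> (cball y \<rho>) \<le> (\<Sum>i\<in>I. r i powr (-q) * measure \<mu> (cball (ctr i) (r i)))"
          using Suc.IH by blast
        show "\<And>i p. i \<in> I \<Longrightarrow> p \<in> E \<inter> cball y \<rho> \<Longrightarrow> p \<in> cball (ctr i) (r i) \<Longrightarrow> r i < \<delta>*\<rho>"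
          using False by (meson not_le)
      qed
    qed
  qed
qed

lemma cover_bound:
  assumes w: "w \<in> E" and R: "0 < R" and diam: "ereal R < ediam E"
    and cpt: "compact (E \<inter> cball w R)"
    and rB: "\<forall>b\<in>\<B>. 0 < snd b \<and> snd b \<le> R"
    and covB: "E \<inter> cball w R \<subseteq> (\<Union>b\<in>\<B>. cball (fst b) (snd b))"
  shows "ennreal (K * 2 powr q / Cd * R powr (-q) * measure \<mu> (cball w R))
     \<le> (\<Sum>\<^sub>\<infinity>b\<in>\<B>. ennreal (snd b powr (-q) * measure \<mu> (cball (fst b) (snd b))))"
proof -
  define g where "g b = snd b powr (-q) * measure \<mu> (cball (fst b) (snd b))" for b :: "'a \<times> real"
  have "E \<inter> cball w R \<subseteq> (\<Union>b\<in>\<B>. ball (fst b) (2 * snd b))"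
  proof
    fix x assume "x \<in> E \<inter> cball w R"
    then obtain b where b: "b \<in> \<B>" "x \<in> cball (fst b) (snd b)" using covB by blast
    then have "x \<in> ball (fst b) (2 * snd b)" using rB by auto
    then show "x \<in> (\<Union>b\<in>\<B>. ball (fst b) (2 * snd b))" using b(1) by blast
  qed
  then obtain B' where B': "B' \<subseteq> \<B>" "finite B'" "E \<inter> cball w R \<subseteq> (\<Union>b\<in>B'. ball (fst b) (2 * snd b))"
    using compactE_image[OF cpt, of \<B> "\<lambda>b. ball (fst b) (2 * snd b)"] by auto
  have "w \<in> E \<inter> cball w R" using w R by simp
  then have ne: "B' \<noteq> {}" using B'(3) by auto
  define m where "m = Min ((\<lambda>b. 2 * snd b) ` B')"
  have m_pos: "0 < m" unfolding m_def using B' ne rB by (subst Min_gr_iff) auto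
  have m_le: "m \<le> 2 * snd b" if "b \<in> B'" for b unfolding m_def using B'(2) that by (intro Min_le) auto
  have "\<delta> < 1" using \<delta>_le by simp
  then obtain J where J: "\<delta>^J < m / R" using real_arch_pow_inv[of "m/R" \<delta>] m_pos R by auto
  then have J': "\<delta>^J * R \<le> m" using R by (simp add: less_divide_eq)
  have main: "K * R powr (-q) * measure \<mu> (cball w R) \<le> (\<Sum>b\<in>B'. (2 * snd b) powr (-q) * measure \<mu> (cball (fst b) (2 * snd b)))"
  proof -
    have radB: "\<forall>i\<in>B'. \<delta>^J * R \<le> 2 * snd i \<and> 2 * snd i \<le> 2 * R"
      using J' m_le rB B'(1) by force
    have covB': "E \<inter> cball w R \<subseteq> (\<Union>i\<in>B'. cball (fst i) (2 * snd i))"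
      using B'(3) ball_subset_cball by blast
    show ?thesis
      using fin_main[where J=J and ctr=fst and r="\<lambda>b. 2 * snd b"] w R diam B'(2) radB covB' by blast
  qed
  have trm: "(2 * snd b) powr (-q) * measure \<mu> (cball (fst b) (2 * snd b)) \<le> 2 powr (-q) * Cd * g b" if "b \<in> B'" for b
  proof -
    have sb: "0 < snd b" using rB B' that by auto
    have "measure \<mu> (cball (fst b) (2 * snd b)) \<le> Cd * measure \<mu> (cball (fst b) (snd b))"
      using sb by (rule dblb)
    then have "(2 * snd b) powr (-q) * measure \<mu> (cball (fst b) (2 * snd b)) \<le> (2 * snd b) powr (-q) * (Cd * measure \<mu> (cball (fst b) (snd b)))"
      by (intro mult_left_mono) auto
    also have "\<dots> = 2 powr (-q) * Cd * g b" unfolding g_def by (simp add: powr_mult)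
    finally show ?thesis .
  qed
  have "K * R powr (-q) * measure \<mu> (cball w R) \<le> (\<Sum>b\<in>B'. 2 powr (-q) * Cd * g b)"
    using main trm by (meson order_trans sum_mono)
  also have "\<dots> = 2 powr (-q) * Cd * (\<Sum>b\<in>B'. g b)" by (simp add: sum_distrib_left)
  finally have ineq: "K * R powr (-q) * measure \<mu> (cball w R) \<le> 2 powr (-q) * Cd * (\<Sum>b\<in>B'. g b)" .
  have "K * 2 powr q / Cd * R powr (-q) * measure \<mu> (cball w R) = (2 powr q / Cd) * (K * R powr (-q) * measure \<mu> (cball w R))"
    by simp
  also have "\<dots> \<le> (2 powr q / Cd) * (2 powr (-q) * Cd * (\<Sum>b\<in>B'. g b))"
    using ineq Cd_ge1 by (intro mult_left_mono) auto
  also have "\<dots> = (2 powr q * 2 powr (-q)) * (\<Sum>b\<in>B'. g b)" using Cd_ge1 by simp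
  also have "2 powr q * 2 powr (-q) = 1" by (simp add: powr_add[symmetric])
  finally have ineq2: "K * 2 powr q / Cd * R powr (-q) * measure \<mu> (cball w R) \<le> (\<Sum>b\<in>B'. g b)" by simp
  have gnn: "0 \<le> g b" if "b \<in> B'" for b
    unfolding g_def using rB B' that meas_pos[of "snd b" "fst b"] by (intro mult_nonneg_nonneg) auto
  have "ennreal (K * 2 powr q / Cd * R powr (-q) * measure \<mu> (cball w R)) \<le> ennreal (\<Sum>b\<in>B'. g b)"
    using ineq2 by (rule ennreal_leI)
  also have "\<dots> = (\<Sum>b\<in>B'. ennreal (g b))" using gnn by (simp add: sum_ennreal)
  also have "\<dots> = (\<Sum>\<^sub>\<infinity>b\<in>B'. ennreal (g b))" using B'(2) by simp
  also have "\<dots> \<le> (\<Sum>\<^sub>\<infinity>b\<in>\<B>. ennreal (g b))"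
    using B'(1) by (intro infsum_mono_neutral) (auto intro: nonneg_summable_on_complete)
  finally show ?thesis unfolding g_def .
qed

end
lemma compact_part:
  fixes \<mu> :: "('a::complete_space) measure" and A :: "'a set"
  assumes "dbl \<mu> Cd" "closed A"
  shows "compact (A \<inter> cball w R)"
proof -
  interpret D: dbl \<mu> Cd by (rule assms(1))
  have "complete (A \<inter> cball w R)"
    using assms(2) by (intro complete_closed_subset[OF _ _ complete_UNIV]) auto
  moreover have "\<forall>\<epsilon>>0. \<exists>k. finite k \<and> A \<inter> cball w R \<subseteq> (\<Union>x\<in>k. ball x \<epsilon>)"
  proof (intro allI impI)
    fix \<epsilon> :: real assume e: "\<epsilon> > 0"
    have "A \<inter> cball w R \<subseteq> cball w (max R 1)" by auto
    moreover have "0 < \<epsilon>/2" "0 < max R 1" using e by auto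
    ultimately have "\<exists>Z\<subseteq>A \<inter> cball w R. finite Z \<and> (\<forall>a\<in>Z. \<forall>b\<in>Z. a \<noteq> b \<longrightarrow> \<epsilon>/2 < dist a b) \<and> (\<forall>e\<in>A \<inter> cball w R. \<exists>z\<in>Z. dist e z \<le> \<epsilon>/2)"
      using D.maximal_sep[of "\<epsilon>/2" "max R 1" "A \<inter> cball w R" w] by blast
    then obtain Z where Z: "Z \<subseteq> A \<inter> cball w R" "finite Z" "\<forall>e\<in>A \<inter> cball w R. \<exists>z\<in>Z. dist e z \<le> \<epsilon>/2"
      by blast
    have "A \<inter> cball w R \<subseteq> (\<Union>x\<in>Z. ball x \<epsilon>)"
    proof
      fix t assume "t \<in> A \<inter> cball w R"
      then obtain z where "z \<in> Z" "dist t z \<le> \<epsilon>/2" using Z(3) by blast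
      then have "t \<in> ball z \<epsilon>" using e by (simp add: dist_commute)
      then show "t \<in> (\<Union>x\<in>Z. ball x \<epsilon>)" using \<open>z \<in> Z\<close> by blast
    qed
    then show "\<exists>k. finite k \<and> A \<inter> cball w R \<subseteq> (\<Union>x\<in>k. ball x \<epsilon>)" using Z(2) by blast
  qed
  ultimately show ?thesis by (simp add: compact_eq_totally_bounded)
qed

theorem lemma5p1:
  fixes \<mu> :: "('a::complete_space) measure" and E :: "'a set" and q :: real
  assumes "doubling_mms \<mu>"
    and "closed E"
    and "upper_assouad_codim \<mu> E < ereal q"
  shows "\<exists>C>0. \<forall>w\<in>E. \<forall>R. 0 < R \<longrightarrow> ereal R < ediam E \<longrightarrow>
           hausdorff_content_codim \<mu> q R (E \<inter> cball w R) \<ge> ennreal (C * R powr (-q) * measure \<mu> (cball w R))"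
proof -
  obtain Cd where "sets \<mu> = sets borel"
    "\<And>x r. r > 0 \<Longrightarrow> 0 < emeasure \<mu> (cball x r) \<and> emeasure \<mu> (cball x r) < \<infinity>"
    "\<And>x r. r > 0 \<Longrightarrow> measure \<mu> (cball x (2 * r)) \<le> Cd * measure \<mu> (cball x r)"
    using assms(1) unfolding doubling_mms_def by blast
  then interpret D: dbl \<mu> Cd by unfold_locales auto
  obtain s where s: "s \<ge> 0" "s < q" and c: "\<exists>c>0. \<forall>x\<in>E. \<forall>r R. 0 < r \<longrightarrow> r < R \<longrightarrow> ereal R < ediam E \<longrightarrow>
        measure \<mu> (nbhd E r \<inter> cball x R) / measure \<mu> (cball x R) \<ge> c * (r / R) powr s"
  proof -
    from assms(3) obtain t where "t \<in> {ereal s | s. s \<ge> 0 \<and>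
     (\<exists>c>0. \<forall>x\<in>E. \<forall>r R. 0 < r \<longrightarrow> r < R \<longrightarrow> ereal R < ediam E \<longrightarrow>
        measure \<mu> (nbhd E r \<inter> cball x R) / measure \<mu> (cball x R) \<ge> c * (r / R) powr s)}" "t < ereal q"
      unfolding upper_assouad_codim_def Inf_less_iff by blast
    then obtain s0 where s0: "t = ereal s0" "s0 \<ge> 0" "\<exists>c>0. \<forall>x\<in>E. \<forall>r R. 0 < r \<longrightarrow> r < R \<longrightarrow> ereal R < ediam E \<longrightarrow>
        measure \<mu> (nbhd E r \<inter> cball x R) / measure \<mu> (cball x R) \<ge> c * (r / R) powr s0" "t < ereal q"
      by blast
    then have "s0 < q" by simp
    then show ?thesis using that[of s0] s0 by blast
  qed
  then obtain c where c: "c > 0" "\<And>x r R. x\<in>E \<Longrightarrow> 0 < r \<Longrightarrow> r < R \<Longrightarrow> ereal R < ediam E \<Longrightarrow>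
        c * (r / R) powr s \<le> measure \<mu> (nbhd E r \<inter> cball x R) / measure \<mu> (cball x R)" by blast
  interpret C: codim \<mu> Cd E c s q by unfold_locales (use s c in auto)
  define C0 where "C0 = C.K * 2 powr q / Cd"
  have C0: "C0 > 0" unfolding C0_def using C.K_pos D.Cd_ge1 by simp
  have "\<forall>w\<in>E. \<forall>R. 0 < R \<longrightarrow> ereal R < ediam E \<longrightarrow>
           hausdorff_content_codim \<mu> q R (E \<inter> cball w R) \<ge> ennreal (C0 * R powr (-q) * measure \<mu> (cball w R))"
  proof (intro ballI allI impI)
    fix w R assume w: "w \<in> E" and R: "0 < R" and diam: "ereal R < ediam E"
    have cpt: "compact (E \<inter> cball w R)" using compact_part[OF D.dbl_axioms assms(2)] .
    show "hausdorff_content_codim \<mu> q R (E \<inter> cball w R) \<ge> ennreal (C0 * R powr (-q) * measure \<mu> (cball w R))"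
      unfolding hausdorff_content_codim_def
    proof (rule Inf_greatest)
      fix x assume "x \<in> {(\<Sum>\<^sub>\<infinity>b\<in>\<B>. ennreal (snd b powr (-q) * measure \<mu> (cball (fst b) (snd b)))) | \<B>.
        countable \<B> \<and> (\<forall>b\<in>\<B>. 0 < snd b \<and> snd b \<le> R) \<and> E \<inter> cball w R \<subseteq> (\<Union>b\<in>\<B>. cball (fst b) (snd b))}"
      then obtain \<B> where x: "x = (\<Sum>\<^sub>\<infinity>b\<in>\<B>. ennreal (snd b powr (-q) * measure \<mu> (cball (fst b) (snd b))))"
        and B: "\<forall>b\<in>\<B>. 0 < snd b \<and> snd b \<le> R" "E \<inter> cball w R \<subseteq> (\<Union>b\<in>\<B>. cball (fst b) (snd b))"
        by blast
      show "ennreal (C0 * R powr (-q) * measure \<mu> (cball w R)) \<le> x"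
        unfolding x C0_def by (rule C.cover_bound[OF w R diam cpt B])
    qed
  qed
  with C0 show ?thesis by blast
qed

end
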